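(* Let $G$ be a finite graph and let $f\colon G\to G$ be a graph map whose transition matrix $A$ is primitive (some power $A^k$, $k\ge 1$, has all entries positive). Let $\lambda_f$ be the spectral radius of $A$ and let $\rho_f$ be the spectral radius of the induced map $f_*\colon H_1(G;\mathbb{R})\to H_1(G;\mathbb{R})$. Then $\lambda_f=\rho_f$ if and only if $f$ is orientable. Moreover, $\lambda_f$ (resp. $-\lambda_f$) is an eigenvalue of $f_*$ if and only if $f$ is positively orientable (resp. negatively orientable).
   Context: A graph map $f\colon G\to G$ is a continuous map sending vertices to vertices and each edge to a nondegenerate edge path. Its transition matrix $A$ has $(i,j)$ entry equal to the number of times the edge path $f(e_j)$ crosses the edge $e_i$ (in either direction). An orientation on $G$ is a choice of positive orientation of each edge; an edge path is positive (resp. negative) if it crosses each edge in its positive (resp. negative) direction. $f$ is positively orientable (resp. negatively orientable) if there is an orientation of $G$ such that every positively oriented edge is mapped to a positive (resp. negative) edge path; $f$ is orientable if it is positively or negatively orientable. *)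

theory Defs
  imports Complex_Main
begin

text \<open>
An oriented edge (a crossing) is a pair (e, b): b = True means e is crossed
from src e to tgt e, b = False means it is crossed from tgt e to src e.
\<close>

definition cross_start :: "('e \<Rightarrow> 'v) \<Rightarrow> ('e \<Rightarrow> 'v) \<Rightarrow> 'e \<times> bool \<Rightarrow> 'v" where
  "cross_start src tgt c = (if snd c then src (fst c) else tgt (fst c))"

definition cross_end :: "('e \<Rightarrow> 'v) \<Rightarrow> ('e \<Rightarrow> 'v) \<Rightarrow> 'e \<times> bool \<Rightarrow> 'v" where
  "cross_end src tgt c = (if snd c then tgt (fst c) else src (fst c))"

definition edge_path :: "('e \<Rightarrow> 'v) \<Rightarrow> ('e \<Rightarrow> 'v) \<Rightarrow> ('e \<times> bool) list \<Rightarrow> 'v \<Rightarrow> 'v \<Rightarrow> bool" where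
  "edge_path src tgt p u w \<longleftrightarrow>
     p \<noteq> [] \<and> cross_start src tgt (hd p) = u \<and> cross_end src tgt (last p) = w \<and>
     (\<forall>i. Suc i < length p \<longrightarrow> cross_end src tgt (p ! i) = cross_start src tgt (p ! Suc i))"

definition graph_map :: "('e \<Rightarrow> 'v) \<Rightarrow> ('e \<Rightarrow> 'v) \<Rightarrow> ('v \<Rightarrow> 'v) \<Rightarrow> ('e \<Rightarrow> ('e \<times> bool) list) \<Rightarrow> bool" where
  "graph_map src tgt fV fE \<longleftrightarrow> (\<forall>e. edge_path src tgt (fE e) (fV (src e)) (fV (tgt e)))"

definition trans_mat :: "('e \<Rightarrow> ('e \<times> bool) list) \<Rightarrow> 'e \<Rightarrow> 'e \<Rightarrow> real" where
  "trans_mat fE i j = real (count_list (map fst (fE j)) i)"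

definition mat_mult :: "('e::finite \<Rightarrow> 'e \<Rightarrow> real) \<Rightarrow> ('e \<Rightarrow> 'e \<Rightarrow> real) \<Rightarrow> 'e \<Rightarrow> 'e \<Rightarrow> real" where
  "mat_mult M N i j = (\<Sum>k\<in>UNIV. M i k * N k j)"

primrec mat_pow :: "('e::finite \<Rightarrow> 'e \<Rightarrow> real) \<Rightarrow> nat \<Rightarrow> 'e \<Rightarrow> 'e \<Rightarrow> real" where
  "mat_pow M 0 = (\<lambda>i j. if i = j then 1 else 0)"
| "mat_pow M (Suc n) = mat_mult (mat_pow M n) M"

definition primitive :: "('e::finite \<Rightarrow> 'e \<Rightarrow> real) \<Rightarrow> bool" where
  "primitive M \<longleftrightarrow> (\<exists>k\<ge>1. \<forall>i j. mat_pow M k i j > 0)"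

definition mat_vec :: "('e::finite \<Rightarrow> 'e \<Rightarrow> real) \<Rightarrow> ('e \<Rightarrow> complex) \<Rightarrow> 'e \<Rightarrow> complex" where
  "mat_vec M v i = (\<Sum>j\<in>UNIV. complex_of_real (M i j) * v j)"

definition mat_eigenvalue :: "('e::finite \<Rightarrow> 'e \<Rightarrow> real) \<Rightarrow> complex \<Rightarrow> bool" where
  "mat_eigenvalue M \<mu> \<longleftrightarrow> (\<exists>v. (\<exists>i. v i \<noteq> 0) \<and> mat_vec M v = (\<lambda>i. \<mu> * v i))"

definition spectral_rad :: "('e::finite \<Rightarrow> 'e \<Rightarrow> real) \<Rightarrow> real" where
  "spectral_rad M = Sup (cmod ` {\<mu>. mat_eigenvalue M \<mu>})"

text \<open>Cellular chain map of f in degree 1: entry (i,j) = signed number of crossings of e_i by f(e_j).\<close>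
definition sign_mat :: "('e \<Rightarrow> ('e \<times> bool) list) \<Rightarrow> 'e \<Rightarrow> 'e \<Rightarrow> real" where
  "sign_mat fE i j = (\<Sum>c\<leftarrow>fE j. if fst c = i then (if snd c then 1 else -1) else 0)"

text \<open>Cellular boundary map and 1-cycles (= H_1(G) for a graph, with complex coefficients,
 i.e. the complexification of H_1(G;R)).\<close>
definition bdry :: "('e::finite \<Rightarrow> 'v) \<Rightarrow> ('e \<Rightarrow> 'v) \<Rightarrow> ('e \<Rightarrow> complex) \<Rightarrow> 'v \<Rightarrow> complex" where
  "bdry src tgt v w = (\<Sum>e\<in>UNIV. (if tgt e = w then v e else 0) - (if src e = w then v e else 0))"

definition is_cycle :: "('e::finite \<Rightarrow> 'v) \<Rightarrow> ('e \<Rightarrow> 'v) \<Rightarrow> ('e \<Rightarrow> complex) \<Rightarrow> bool" where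
  "is_cycle src tgt v \<longleftrightarrow> bdry src tgt v = (\<lambda>w. 0)"

definition H1_eigenvalue :: "('e::finite \<Rightarrow> 'v) \<Rightarrow> ('e \<Rightarrow> 'v) \<Rightarrow> ('e \<Rightarrow> ('e \<times> bool) list) \<Rightarrow> complex \<Rightarrow> bool" where
  "H1_eigenvalue src tgt fE \<mu> \<longleftrightarrow>
     (\<exists>v. (\<exists>i. v i \<noteq> 0) \<and> is_cycle src tgt v \<and> mat_vec (sign_mat fE) v = (\<lambda>i. \<mu> * v i))"

text \<open>Spectral radius of f_* (0 if H_1 = 0).\<close>
definition H1_spectral_rad :: "('e::finite \<Rightarrow> 'v) \<Rightarrow> ('e \<Rightarrow> 'v) \<Rightarrow> ('e \<Rightarrow> ('e \<times> bool) list) \<Rightarrow> real" where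
  "H1_spectral_rad src tgt fE = Sup (insert 0 (cmod ` {\<mu>. H1_eigenvalue src tgt fE \<mu>}))"

text \<open>Orientations: \<sigma> e = True keeps the reference orientation of e, False reverses it.\<close>
definition rev_path :: "('e \<times> bool) list \<Rightarrow> ('e \<times> bool) list" where
  "rev_path p = rev (map (\<lambda>(e, b). (e, \<not> b)) p)"

definition oriented_image :: "('e \<Rightarrow> bool) \<Rightarrow> ('e \<Rightarrow> ('e \<times> bool) list) \<Rightarrow> 'e \<Rightarrow> ('e \<times> bool) list" where
  "oriented_image \<sigma> fE e = (if \<sigma> e then fE e else rev_path (fE e))"

definition positive_path :: "('e \<Rightarrow> bool) \<Rightarrow> ('e \<times> bool) list \<Rightarrow> bool" where
  "positive_path \<sigma> p \<longleftrightarrow> (\<forall>(e, b)\<in>set p. b = \<sigma> e)"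

definition negative_path :: "('e \<Rightarrow> bool) \<Rightarrow> ('e \<times> bool) list \<Rightarrow> bool" where
  "negative_path \<sigma> p \<longleftrightarrow> (\<forall>(e, b)\<in>set p. b = (\<not> \<sigma> e))"

definition pos_orientable :: "('e \<Rightarrow> ('e \<times> bool) list) \<Rightarrow> bool" where
  "pos_orientable fE \<longleftrightarrow> (\<exists>\<sigma>. \<forall>e. positive_path \<sigma> (oriented_image \<sigma> fE e))"

definition neg_orientable :: "('e \<Rightarrow> ('e \<times> bool) list) \<Rightarrow> bool" where
  "neg_orientable fE \<longleftrightarrow> (\<exists>\<sigma>. \<forall>e. negative_path \<sigma> (oriented_image \<sigma> fE e))"

definition orientable :: "('e \<Rightarrow> ('e \<times> bool) list) \<Rightarrow> bool" where
  "orientable fE \<longleftrightarrow> pos_orientable fE \<or> neg_orientable fE"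

end

theory Submission imports Defs "HOL-Analysis.Analysis" begin


lemma mat_pow_nonneg:
  assumes "\<And>i j. M i j \<ge> 0" shows "mat_pow M n i j \<ge> 0"
  using assms by (induction n arbitrary: i j) (auto simp: mat_mult_def intro!: sum_nonneg)

lemma mat_pow_eigen:
  fixes M :: "'e::finite \<Rightarrow> 'e \<Rightarrow> real"
  assumes "\<And>i. (\<Sum>j\<in>UNIV. M i j * x j) = r * x i"
  shows "(\<Sum>j\<in>UNIV. mat_pow M n i j * x j) = r ^ n * x i"
proof (induction n arbitrary: i)
  case 0
  have "(\<Sum>j\<in>UNIV. (if i = j then 1 else 0) * x j) = (\<Sum>j\<in>UNIV. if i = j then x j else 0)"
    by (intro sum.cong) auto
  then show ?case by simp
next
  case (Suc n)
  have "(\<Sum>j\<in>UNIV. mat_pow M (Suc n) i j * x j) = (\<Sum>j\<in>UNIV. \<Sum>k\<in>UNIV. mat_pow M n i k * (M k j * x j))"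
    by (simp add: mat_mult_def sum_distrib_right mult.assoc)
  also have "\<dots> = (\<Sum>k\<in>UNIV. mat_pow M n i k * (\<Sum>j\<in>UNIV. M k j * x j))"
    by (subst sum.swap) (simp add: sum_distrib_left)
  also have "\<dots> = (\<Sum>k\<in>UNIV. mat_pow M n i k * (r * x k))" by (simp add: assms)
  also have "\<dots> = r * (\<Sum>k\<in>UNIV. mat_pow M n i k * x k)"
    by (simp add: sum_distrib_left algebra_simps)
  finally show ?case using Suc by simp
qed

lemma mat_pow_eigen_left:
  fixes M :: "'e::finite \<Rightarrow> 'e \<Rightarrow> real"
  assumes "\<And>j. (\<Sum>i\<in>UNIV. x i * M i j) = r * x j"
  shows "(\<Sum>i\<in>UNIV. x i * mat_pow M n i j) = r ^ n * x j"
proof (induction n arbitrary: j)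
  case 0
  have "(\<Sum>i\<in>UNIV. x i * (if i = j then 1 else 0)) = (\<Sum>i\<in>UNIV. if i = j then x i else 0)"
    by (intro sum.cong) auto
  then show ?case by simp
next
  case (Suc n)
  have "(\<Sum>i\<in>UNIV. x i * mat_pow M (Suc n) i j) = (\<Sum>i\<in>UNIV. \<Sum>k\<in>UNIV. x i * mat_pow M n i k * M k j)"
    by (simp add: mat_mult_def sum_distrib_left mult.assoc)
  also have "\<dots> = (\<Sum>k\<in>UNIV. (\<Sum>i\<in>UNIV. x i * mat_pow M n i k) * M k j)"
    by (subst sum.swap) (simp add: sum_distrib_right)
  also have "\<dots> = (\<Sum>k\<in>UNIV. r ^ n * x k * M k j)" by (simp add: Suc)
  also have "\<dots> = r ^ n * (\<Sum>k\<in>UNIV. x k * M k j)"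
    by (simp add: sum_distrib_left algebra_simps)
  finally show ?case using assms by simp
qed

lemma pf_exists:
  fixes M :: "'e::finite \<Rightarrow> 'e \<Rightarrow> real"
  assumes nn: "\<And>i j. M i j \<ge> 0" and col: "\<And>j. \<exists>i. M i j > 0"
  shows "\<exists>x r. (\<forall>i. x i \<ge> 0) \<and> (\<exists>i. x i > 0) \<and> r > 0 \<and> (\<forall>i. (\<Sum>j\<in>UNIV. M i j * x j) = r * x i)"
proof -
  define S where "S = {x::real^'e. (\<forall>i. 0 \<le> x$i) \<and> sum (\<lambda>i. x$i) UNIV = 1}"
  define den where "den x = (\<Sum>i\<in>UNIV. \<Sum>j\<in>UNIV. M i j * x$j)" for x :: "real^'e"
  define g where "g x = (\<chi> i. (\<Sum>j\<in>UNIV. M i j * x$j) / den x)" for x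
  have denpos: "den x > 0" if "x \<in> S" for x
  proof -
    from that have x0: "\<forall>i. 0 \<le> x$i" and xs: "sum (\<lambda>i. x$i) UNIV = 1" by (auto simp: S_def)
    have "\<exists>j. x$j > 0"
    proof (rule ccontr)
      assume "\<not> ?thesis" then have "\<forall>j. x$j = 0" using x0 by (auto intro: order.antisym simp: not_less)
      then show False using xs by simp
    qed
    then obtain j where j: "x$j > 0" by blast
    obtain i where i: "M i j > 0" using col by blast
    have "M i j * x$j \<le> (\<Sum>j\<in>UNIV. M i j * x$j)"
      by (rule member_le_sum) (use nn x0 in auto)
    also have "\<dots> \<le> den x" unfolding den_def
      by (rule member_le_sum[where f="\<lambda>i. \<Sum>j\<in>UNIV. M i j * x$j"]) (use nn x0 in \<open>auto intro!: sum_nonneg\<close>)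
    finally show ?thesis using i j by (smt (verit) mult_pos_pos)
  qed
  have cS: "compact S"
  proof (subst compact_eq_bounded_closed, intro conjI)
    show "bounded S" unfolding bounded_iff
    proof (intro exI ballI)
      fix x assume "x \<in> S"
      then have "sum (\<lambda>i. \<bar>x$i\<bar>) UNIV = 1" by (simp add: S_def)
      then show "norm x \<le> 1" using norm_le_l1_cart[of x] by simp
    qed
    have "S = {x. \<forall>i. 0 \<le> x$i} \<inter> {x. sum (\<lambda>i. x$i) UNIV = 1}" by (auto simp: S_def)
    moreover have "closed {x::real^'e. \<forall>i. 0 \<le> x$i}"
      by (intro closed_Collect_all closed_Collect_le continuous_intros)
    moreover have "closed {x::real^'e. sum (\<lambda>i. x$i) UNIV = 1}"
      by (intro closed_Collect_eq continuous_intros)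
    ultimately show "closed S" by auto
  qed
  have vS: "convex S" unfolding convex_def S_def
    by (auto simp: sum.distrib sum_distrib_left[symmetric])
  have neS: "S \<noteq> {}"
  proof -
    have "(\<chi> i. 1 / real CARD('e)) \<in> S" by (simp add: S_def)
    then show ?thesis by blast
  qed
  have contg: "continuous_on S g" unfolding g_def den_def
    by (intro continuous_intros) (use denpos in \<open>fastforce simp: den_def\<close>)
  have gS: "g \<in> S \<rightarrow> S"
  proof
    fix x assume x: "x \<in> S"
    then have "0 \<le> (\<Sum>j\<in>UNIV. M i j * x$j) / den x" for i
      using denpos[OF x] nn by (auto simp: S_def intro!: sum_nonneg divide_nonneg_pos)
    moreover have "(\<Sum>i\<in>UNIV. (\<Sum>j\<in>UNIV. M i j * x$j) / den x) = 1"
      using denpos[OF x] by (simp add: sum_divide_distrib[symmetric] den_def)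
    ultimately show "g x \<in> S" by (simp add: S_def g_def)
  qed
  obtain x where x: "x \<in> S" "g x = x" using brouwer[OF cS vS neS contg gS] by blast
  have eq: "(\<Sum>j\<in>UNIV. M i j * x$j) = den x * x$i" for i
  proof -
    have "(\<Sum>j\<in>UNIV. M i j * x$j) / den x = x$i" using x(2) by (metis g_def vec_lambda_beta)
    then show ?thesis using denpos[OF x(1)] by (simp add: field_simps)
  qed
  have "\<exists>i. x$i > 0"
  proof (rule ccontr)
    assume "\<not> ?thesis" then have "\<forall>j. x$j = 0" using x(1) by (auto simp: S_def less_eq_real_def)
    then show False using x(1) by (simp add: S_def)
  qed
  then show ?thesis using x(1) eq denpos[OF x(1)]
    by (intro exI[of _ "\<lambda>i. x$i"] exI[of _ "den x"]) (auto simp: S_def)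
qed



lemma prim_col:
  fixes M :: "'e::finite \<Rightarrow> 'e \<Rightarrow> real"
  assumes nn: "\<And>i j. M i j \<ge> 0" and prim: "primitive M"
  shows "\<exists>i. M i j > 0"
proof (rule ccontr)
  assume a: "\<not> ?thesis"
  have z: "M i j = 0" for i using nn[of i j] a by (auto simp: less_eq_real_def)
  obtain k where k: "k \<ge> 1" "\<forall>i j. mat_pow M k i j > 0" using prim by (auto simp: primitive_def)
  then obtain k' where "k = Suc k'" by (cases k) auto
  then have "mat_pow M k i j = 0" for i by (simp add: mat_mult_def z)
  then show False using k by (metis less_irrefl)
qed

lemma prim_row:
  fixes M :: "'e::finite \<Rightarrow> 'e \<Rightarrow> real"
  assumes nn: "\<And>i j. M i j \<ge> 0" and prim: "primitive M"
  shows "\<exists>j. M i j > 0"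
proof (rule ccontr)
  assume a: "\<not> ?thesis"
  have z: "M i j = 0" for j using nn[of i j] a by (auto simp: less_eq_real_def)
  have "n \<ge> 1 \<Longrightarrow> mat_pow M n i j = 0" for n j
  proof (induction n arbitrary: j)
    case 0 then show ?case by simp
  next
    case (Suc n)
    show ?case
    proof (cases n)
      case 0
      have eq: "(if i = k then 1 else 0) * M k j = (if i = k then M k j else 0)" for k by simp
      show ?thesis unfolding 0 by (simp add: mat_mult_def eq z)
    next
      case (Suc m) then show ?thesis using Suc.IH by (simp add: mat_mult_def)
    qed
  qed
  then show False using prim by (auto simp: primitive_def) (metis less_irrefl)
qed

lemma prim_pos_vec:
  fixes M :: "'e::finite \<Rightarrow> 'e \<Rightarrow> real"
  assumes nn: "\<And>i j. M i j \<ge> 0" and prim: "primitive M"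
    and x0: "\<And>i. x i \<ge> 0" and xp: "x j0 > 0"
    and ev: "\<And>i. (\<Sum>j\<in>UNIV. M i j * x j) = r * x i"
  shows "x i > 0"
proof -
  obtain k where k: "\<forall>i j. mat_pow M k i j > 0" using prim by (auto simp: primitive_def)
  have "0 < mat_pow M k i j0 * x j0" using k xp by simp
  also have "\<dots> \<le> (\<Sum>j\<in>UNIV. mat_pow M k i j * x j)"
    by (rule member_le_sum) (use k x0 in \<open>auto intro!: mult_nonneg_nonneg simp: order.strict_implies_order\<close>)
  also have "\<dots> = r ^ k * x i" by (rule mat_pow_eigen[OF ev])
  finally have "x i \<noteq> 0" by auto
  then show ?thesis using x0[of i] by auto
qed

lemma prim_pos_vec_left:
  fixes M :: "'e::finite \<Rightarrow> 'e \<Rightarrow> real"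
  assumes nn: "\<And>i j. M i j \<ge> 0" and prim: "primitive M"
    and x0: "\<And>i. x i \<ge> 0" and xp: "x j0 > 0"
    and ev: "\<And>j. (\<Sum>i\<in>UNIV. x i * M i j) = r * x j"
  shows "x j > 0"
proof -
  obtain k where k: "\<forall>i j. mat_pow M k i j > 0" using prim by (auto simp: primitive_def)
  have "0 < x j0 * mat_pow M k j0 j" using k xp by simp
  also have "\<dots> \<le> (\<Sum>i\<in>UNIV. x i * mat_pow M k i j)"
    by (rule member_le_sum[where f="\<lambda>i. x i * mat_pow M k i j"]) (use k x0 in \<open>auto intro!: mult_nonneg_nonneg simp: order.strict_implies_order\<close>)
  also have "\<dots> = r ^ k * x j" by (rule mat_pow_eigen_left[OF ev])
  finally have "x j \<noteq> 0" by auto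
  then show ?thesis using x0[of j] by auto
qed

lemma perron:
  fixes M :: "'e::finite \<Rightarrow> 'e \<Rightarrow> real"
  assumes nn: "\<And>i j. M i j \<ge> 0" and prim: "primitive M"
  obtains u w r where "\<And>i. u i > 0" "\<And>i. w i > 0" "r > 0"
    "\<And>i. (\<Sum>j\<in>UNIV. M i j * u j) = r * u i"
    "\<And>j. (\<Sum>i\<in>UNIV. w i * M i j) = r * w j"
proof -
  obtain u r where u: "\<forall>i. u i \<ge> 0" "\<exists>i. u i > 0" "r > 0" "\<forall>i. (\<Sum>j\<in>UNIV. M i j * u j) = r * u i"
    using pf_exists[of M] nn prim_col[OF nn prim] by blast
  obtain w r' where w: "\<forall>i. w i \<ge> 0" "\<exists>i. w i > 0" "r' > 0" "\<forall>i. (\<Sum>j\<in>UNIV. M j i * w j) = r' * w i"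
    using pf_exists[of "\<lambda>i j. M j i"] nn prim_row[OF nn prim] by blast
  have up: "u i > 0" for i using u prim_pos_vec[OF nn prim, of u] by blast
  have wl: "(\<Sum>i\<in>UNIV. w i * M i j) = r' * w j" for j using w(4) by (simp add: mult.commute)
  have wp: "w i > 0" for i using w prim_pos_vec_left[OF nn prim, of w _ r'] wl by blast
  have "r * (\<Sum>i\<in>UNIV. w i * u i) = (\<Sum>i\<in>UNIV. w i * (\<Sum>j\<in>UNIV. M i j * u j))"
    using u(4) by (simp add: sum_distrib_left algebra_simps)
  also have "\<dots> = (\<Sum>j\<in>UNIV. (\<Sum>i\<in>UNIV. w i * M i j) * u j)"
    by (simp add: sum_distrib_left sum_distrib_right mult.assoc) (rule sum.swap)
  also have "\<dots> = r' * (\<Sum>j\<in>UNIV. w j * u j)"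
    using wl by (simp add: sum_distrib_left algebra_simps)
  finally have "r = r'"
    using sum_pos[of UNIV "\<lambda>i. w i * u i"] up wp by (simp add: mult_pos_pos)
  then show ?thesis using that[of u w r] up wp u(3,4) wl by blast
qed

lemma dom_le:
  fixes M :: "'e::finite \<Rightarrow> 'e \<Rightarrow> real"
  assumes wp: "\<And>i. w i > 0" and wl: "\<And>j. (\<Sum>i\<in>UNIV. w i * M i j) = r * w j"
    and z0: "\<And>i. z i \<ge> 0" and zp: "z i0 > 0"
    and le: "\<And>i. c * z i \<le> (\<Sum>j\<in>UNIV. M i j * z j)"
  shows "c \<le> r"
proof -
  have "c * (\<Sum>i\<in>UNIV. w i * z i) = (\<Sum>i\<in>UNIV. w i * (c * z i))"
    by (simp add: sum_distrib_left algebra_simps)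
  also have "\<dots> \<le> (\<Sum>i\<in>UNIV. w i * (\<Sum>j\<in>UNIV. M i j * z j))"
    by (intro sum_mono mult_left_mono le) (use wp less_imp_le in auto)
  also have "\<dots> = (\<Sum>j\<in>UNIV. (\<Sum>i\<in>UNIV. w i * M i j) * z j)"
    by (simp add: sum_distrib_left sum_distrib_right mult.assoc) (rule sum.swap)
  also have "\<dots> = r * (\<Sum>j\<in>UNIV. w j * z j)"
    using wl by (simp add: sum_distrib_left algebra_simps)
  finally have *: "c * (\<Sum>i\<in>UNIV. w i * z i) \<le> r * (\<Sum>j\<in>UNIV. w j * z j)" .
  have "0 < w i0 * z i0" using wp zp by simp
  also have "\<dots> \<le> (\<Sum>i\<in>UNIV. w i * z i)"
    by (rule member_le_sum[where f="\<lambda>i. w i * z i"]) (use wp z0 in \<open>auto intro!: mult_nonneg_nonneg simp: order.strict_implies_order\<close>)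
  finally show ?thesis using * by (simp add: mult_le_cancel_right)
qed

lemma dom_eq:
  fixes M :: "'e::finite \<Rightarrow> 'e \<Rightarrow> real"
  assumes wp: "\<And>i. w i > 0" and wl: "\<And>j. (\<Sum>i\<in>UNIV. w i * M i j) = r * w j"
    and le: "\<And>i. r * z i \<le> (\<Sum>j\<in>UNIV. M i j * z j)"
  shows "(\<Sum>j\<in>UNIV. M i j * z j) = r * z i"
proof -
  have "(\<Sum>i\<in>UNIV. w i * ((\<Sum>j\<in>UNIV. M i j * z j) - r * z i))
        = (\<Sum>j\<in>UNIV. (\<Sum>i\<in>UNIV. w i * M i j) * z j) - r * (\<Sum>i\<in>UNIV. w i * z i)"
    by (simp add: sum_subtractf right_diff_distrib sum_distrib_left sum_distrib_right algebra_simps)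
       (rule sum.swap)
  also have "\<dots> = 0" using wl by (simp add: sum_distrib_left algebra_simps)
  finally have "(\<Sum>i\<in>UNIV. w i * ((\<Sum>j\<in>UNIV. M i j * z j) - r * z i)) = 0" .
  moreover have "\<forall>i\<in>UNIV. 0 \<le> w i * ((\<Sum>j\<in>UNIV. M i j * z j) - r * z i)"
    using wp le by (simp add: less_imp_le)
  ultimately have "w i * ((\<Sum>j\<in>UNIV. M i j * z j) - r * z i) = 0"
    by (subst (asm) sum_nonneg_eq_0_iff) auto
  then show ?thesis using wp[of i] by simp
qed

lemma cmod_mat_vec_le:
  fixes M :: "'e::finite \<Rightarrow> 'e \<Rightarrow> real"
  assumes nn: "\<And>i j. M i j \<ge> 0"
  shows "cmod (mat_vec M v i) \<le> (\<Sum>j\<in>UNIV. M i j * cmod (v j))"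
  unfolding mat_vec_def
  by (rule order.trans[OF norm_sum]) (simp add: norm_mult nn)

lemma spectral_rad_eq:
  fixes M :: "'e::finite \<Rightarrow> 'e \<Rightarrow> real"
  assumes nn: "\<And>i j. M i j \<ge> 0"
    and up: "\<And>i. u i > 0" and wp: "\<And>i. w i > 0"
    and ur: "\<And>i. (\<Sum>j\<in>UNIV. M i j * u j) = r * u i"
    and wl: "\<And>j. (\<Sum>i\<in>UNIV. w i * M i j) = r * w j"
  shows "spectral_rad M = r"
proof -
  have rp: "r \<ge> 0"
  proof -
    obtain i0 :: 'e where True by blast
    have "0 \<le> (\<Sum>j\<in>UNIV. M i0 j * u j)" using nn up by (intro sum_nonneg) (simp add: less_imp_le)
    then show ?thesis using ur[of i0] up[of i0] by (simp add: zero_le_mult_iff)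
  qed
  have ev: "mat_eigenvalue M (complex_of_real r)"
    unfolding mat_eigenvalue_def mat_vec_def
  proof (intro exI[of _ "\<lambda>i. complex_of_real (u i)"] conjI)
    obtain i0 :: 'e where True by blast
    show "\<exists>i. complex_of_real (u i) \<noteq> 0" using up[of i0] by (intro exI[of _ i0]) auto
  qed (auto simp: ur[symmetric] simp flip: of_real_mult of_real_sum)
  have bd: "cmod \<mu> \<le> r" if ea: "mat_eigenvalue M \<mu>" for \<mu>
  proof -
    obtain v i0 where v: "v i0 \<noteq> 0" "mat_vec M v = (\<lambda>i. \<mu> * v i)"
      using ea by (auto simp: mat_eigenvalue_def)
    show ?thesis
    proof (rule dom_le[OF wp wl, of "\<lambda>i. cmod (v i)" i0])
      fix i show "cmod \<mu> * cmod (v i) \<le> (\<Sum>j\<in>UNIV. M i j * cmod (v j))"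
        using cmod_mat_vec_le[of M, OF nn, where v=v and i=i] v(2) by (metis norm_mult)
    qed (use v in auto)
  qed
  show ?thesis unfolding spectral_rad_def
  proof (rule cSup_eq_maximum)
    have "r = cmod (complex_of_real r)" using rp by simp
    then show "r \<in> cmod ` {\<mu>. mat_eigenvalue M \<mu>}" using ev by blast
  qed (use bd in auto)
qed



definition eps :: "'e \<times> bool \<Rightarrow> real" where "eps c = (if snd c then 1 else -1)"

lemma sum_sum_list_swap:
  "(\<Sum>e\<in>A. sum_list (map (f e) xs)) = sum_list (map (\<lambda>c. \<Sum>e\<in>A. f e c) xs)"
  by (induction xs) (auto simp: sum.distrib)

lemma sum_list_nth_sum: "sum_list (map f xs) = (\<Sum>p<length xs. f (xs ! p))"
  by (simp add: sum_list_sum_nth atLeast0LessThan)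

lemma trans_mat_sum:
  "trans_mat fE i j = (\<Sum>p<length (fE j). if fst (fE j ! p) = i then 1 else 0)"
proof -
  have "real (count_list (map fst xs) i) = (\<Sum>p<length xs. if fst (xs ! p) = i then 1 else 0)" for xs :: "('a \<times> bool) list"
    by (induction xs) (auto simp del: sum.lessThan_Suc simp add: sum.lessThan_Suc_shift)
  then show ?thesis by (simp add: trans_mat_def)
qed

lemma sign_mat_sum:
  "sign_mat fE i j = (\<Sum>p<length (fE j). if fst (fE j ! p) = i then eps (fE j ! p) else 0)"
  unfolding sign_mat_def sum_list_nth_sum eps_def by simp

lemma trans_mat_nonneg: "trans_mat fE i j \<ge> 0" by (simp add: trans_mat_def)

lemma edge_path_Cons:
  assumes "edge_path src tgt (c # p) a b" "p \<noteq> []"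
  shows "edge_path src tgt p (cross_end src tgt c) b"
  using assms unfolding edge_path_def
  by (auto simp: hd_conv_nth)

lemma path_tele:
  assumes "edge_path src tgt p a b"
  shows "(\<Sum>c\<leftarrow>p. (of_bool (cross_end src tgt c = w) - of_bool (cross_start src tgt c = w) :: complex))
        = of_bool (b = w) - of_bool (a = w)"
  using assms
proof (induction p arbitrary: a)
  case Nil then show ?case by (simp add: edge_path_def)
next
  case (Cons c p)
  show ?case
  proof (cases "p = []")
    case True then show ?thesis using Cons.prems by (simp add: edge_path_def)
  next
    case False
    have s: "cross_start src tgt c = a" using Cons.prems by (simp add: edge_path_def)
    show ?thesis using Cons.IH[OF edge_path_Cons[OF Cons.prems False]] s by simp
  qed
qed

lemma bdry_lin: "bdry src tgt v w = (\<Sum>e\<in>UNIV. (of_bool (tgt e = w) - of_bool (src e = w)) * v e)"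
  unfolding bdry_def by (intro sum.cong) (auto simp: algebra_simps)

lemma sum_of_bool_eq:
  fixes c :: "'a::comm_ring_1"
  assumes "finite U" shows "(\<Sum>u\<in>U. of_bool (t = u) * c) = of_bool (t \<in> U) * c"
proof -
  have "(\<Sum>u\<in>U. of_bool (t = u) * c) = (\<Sum>u\<in>U. if u = t then c else 0)"
    by (intro sum.cong) auto
  then show ?thesis using assms by simp
qed

lemma sign_weight:
  fixes fE :: "'e::finite \<Rightarrow> ('e \<times> bool) list"
  shows
  "(\<Sum>e\<in>UNIV. (of_bool (tgt e = w) - of_bool (src e = w)) * complex_of_real (sign_mat fE e j))
   = (\<Sum>c\<leftarrow>fE j. (of_bool (cross_end src tgt c = w) - of_bool (cross_start src tgt c = w) :: complex))"
proof -
  have "(\<Sum>e\<in>UNIV. (of_bool (tgt e = w) - of_bool (src e = w)) * complex_of_real (sign_mat fE e j))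
    = (\<Sum>e\<in>UNIV. sum_list (map (\<lambda>c. (of_bool (tgt e = w) - of_bool (src e = w)) *
         complex_of_real (if fst c = e then (if snd c then 1 else -1) else 0)) (fE j)))"
    unfolding sign_mat_def by (simp add: sum_list_of_real[symmetric] sum_list_const_mult o_def)
  also have "\<dots> = sum_list (map (\<lambda>c. \<Sum>e\<in>UNIV. (of_bool (tgt e = w) - of_bool (src e = w)) *
         complex_of_real (if fst c = e then (if snd c then 1 else -1) else 0)) (fE j))"
    by (rule sum_sum_list_swap)
  also have "\<dots> = (\<Sum>c\<leftarrow>fE j. (of_bool (cross_end src tgt c = w) - of_bool (cross_start src tgt c = w) :: complex))"
  proof (intro arg_cong[where f=sum_list] map_cong refl)
    fix c :: "'e \<times> bool"
    have "(\<Sum>e\<in>UNIV. (of_bool (tgt e = w) - of_bool (src e = w)) *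
         complex_of_real (if fst c = e then (if snd c then 1 else -1) else 0))
        = (\<Sum>e\<in>UNIV. if e = fst c then (of_bool (tgt e = w) - of_bool (src e = w)) *
         complex_of_real (if snd c then 1 else -1) else 0)"
      by (intro sum.cong) auto
    also have "\<dots> = (of_bool (tgt (fst c) = w) - of_bool (src (fst c) = w)) * complex_of_real (if snd c then 1 else -1)"
      by (subst sum.delta) simp_all
    also have "\<dots> = of_bool (cross_end src tgt c = w) - of_bool (cross_start src tgt c = w)"
      by (auto simp: cross_end_def cross_start_def)
    finally show "(\<Sum>e\<in>UNIV. (of_bool (tgt e = w) - of_bool (src e = w)) *
         complex_of_real (if fst c = e then (if snd c then 1 else -1) else 0))
        = of_bool (cross_end src tgt c = w) - of_bool (cross_start src tgt c = w)" .
  qed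
  finally show ?thesis .
qed

lemma chain_map:
  fixes src tgt :: "'e::finite \<Rightarrow> 'v::finite"
  assumes gm: "graph_map src tgt fV fE"
  shows "bdry src tgt (mat_vec (sign_mat fE) x) w = (\<Sum>u\<in>{u. fV u = w}. bdry src tgt x u)"
proof -
  have "bdry src tgt (mat_vec (sign_mat fE) x) w
      = (\<Sum>e\<in>UNIV. \<Sum>j\<in>UNIV. (of_bool (tgt e = w) - of_bool (src e = w)) * (complex_of_real (sign_mat fE e j) * x j))"
    unfolding bdry_lin mat_vec_def by (simp add: sum_distrib_left)
  also have "\<dots> = (\<Sum>j\<in>UNIV. x j * (\<Sum>e\<in>UNIV. (of_bool (tgt e = w) - of_bool (src e = w)) * complex_of_real (sign_mat fE e j)))"
    by (subst sum.swap) (simp add: sum_distrib_left algebra_simps)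
  also have "\<dots> = (\<Sum>j\<in>UNIV. x j * (of_bool (fV (tgt j) = w) - of_bool (fV (src j) = w)))"
    using gm by (intro sum.cong refl) (simp add: sign_weight path_tele graph_map_def)
  also have "\<dots> = (\<Sum>u\<in>{u. fV u = w}. \<Sum>j\<in>UNIV. (of_bool (tgt j = u) - of_bool (src j = u)) * x j)"
  proof (subst sum.swap, intro sum.cong refl)
    fix j
    have "(\<Sum>u\<in>{u. fV u = w}. (of_bool (tgt j = u) - of_bool (src j = u)) * x j)
        = (\<Sum>u\<in>{u. fV u = w}. of_bool (tgt j = u) * x j) - (\<Sum>u\<in>{u. fV u = w}. of_bool (src j = u) * x j)"
      by (simp only: left_diff_distrib sum_subtractf)
    also have "\<dots> = x j * (of_bool (fV (tgt j) = w) - of_bool (fV (src j) = w))"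
      by (simp add: sum_of_bool_eq algebra_simps)
    finally show "x j * (of_bool (fV (tgt j) = w) - of_bool (fV (src j) = w))
       = (\<Sum>u\<in>{u. fV u = w}. (of_bool (tgt j = u) - of_bool (src j = u)) * x j)" by simp
  qed
  finally show ?thesis by (simp add: bdry_lin)
qed

lemma eig_cycle_big:
  fixes src tgt :: "'e::finite \<Rightarrow> 'v::finite"
  assumes gm: "graph_map src tgt fV fE"
    and ev: "mat_vec (sign_mat fE) v = (\<lambda>i. \<mu> * v i)" and big: "cmod \<mu> > 1"
  shows "is_cycle src tgt v"
proof -
  define y where "y = bdry src tgt v"
  have eq: "\<mu> * y w = (\<Sum>u\<in>{u. fV u = w}. y u)" for w
  proof -
    have "\<mu> * y w = bdry src tgt (\<lambda>i. \<mu> * v i) w"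
      unfolding y_def bdry_lin by (simp add: sum_distrib_left algebra_simps)
    also have "\<dots> = (\<Sum>u\<in>{u. fV u = w}. y u)"
      using chain_map[OF gm, of v w] ev by (simp add: y_def)
    finally show ?thesis .
  qed
  have "cmod \<mu> * (\<Sum>w\<in>UNIV. cmod (y w)) = (\<Sum>w\<in>UNIV. cmod (\<mu> * y w))"
    by (simp add: sum_distrib_left norm_mult)
  also have "\<dots> \<le> (\<Sum>w\<in>UNIV. \<Sum>u\<in>{u. fV u = w}. cmod (y u))"
    unfolding eq by (intro sum_mono norm_sum)
  also have "\<dots> = (\<Sum>u\<in>UNIV. cmod (y u))"
    using sum.group[of UNIV UNIV fV "\<lambda>u. cmod (y u)"] by simp
  finally have "(cmod \<mu> - 1) * (\<Sum>w\<in>UNIV. cmod (y w)) \<le> 0" by (simp add: algebra_simps)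
  moreover have "(\<Sum>w\<in>UNIV. cmod (y w)) \<ge> 0" by (simp add: sum_nonneg)
  ultimately have "(\<Sum>w\<in>UNIV. cmod (y w)) = 0" using big
    by (smt (verit, ccfv_SIG) mult_pos_pos)
  then have "\<forall>w\<in>UNIV. cmod (y w) = 0" by (subst (asm) sum_nonneg_eq_0_iff) auto
  then show ?thesis by (auto simp: is_cycle_def y_def)
qed



lemma tri_eq:
  fixes t :: "'a \<Rightarrow> complex"
  assumes fin: "finite K" and eq: "cmod (sum t K) = (\<Sum>k\<in>K. cmod (t k))" and k: "k \<in> K"
  shows "t k * cnj (sum t K) = of_real (cmod (t k) * cmod (sum t K))"
proof -
  define S where "S = sum t K"
  have le: "Re (t k * cnj S) \<le> cmod (t k) * cmod S" for k
    using complex_Re_le_cmod[of "t k * cnj S"] by (simp add: norm_mult)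
  have "(\<Sum>k\<in>K. Re (t k * cnj S)) = Re (\<Sum>k\<in>K. t k * cnj S)"
    by (simp only: Re_sum)
  also have "\<dots> = Re (S * cnj S)"
    by (simp only: S_def sum_distrib_right)
  also have "\<dots> = cmod S ^ 2" by (simp add: complex_norm_square[symmetric] del: of_real_power)
  also have "\<dots> = (\<Sum>k\<in>K. cmod (t k) * cmod S)"
    using eq by (simp add: S_def power2_eq_square sum_distrib_right)
  finally have "(\<Sum>k\<in>K. cmod (t k) * cmod S - Re (t k * cnj S)) = 0"
    by (simp add: sum_subtractf)
  then have "\<forall>k\<in>K. cmod (t k) * cmod S - Re (t k * cnj S) = 0"
    using fin le by (subst (asm) sum_nonneg_eq_0_iff) auto
  then have re: "Re (t k * cnj S) = cmod (t k * cnj S)" using k by (simp add: norm_mult)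
  then have "Im (t k * cnj S) = 0"
    using cmod_power2[of "t k * cnj S"] by simp
  then have "t k * cnj S = of_real (Re (t k * cnj S))" by (simp add: complex_eq_iff)
  then have "t k * cnj S = of_real (cmod (t k * cnj S))" using re by metis
  moreover have "cmod (t k * cnj S) = cmod (t k) * cmod S" by (simp add: norm_mult)
  ultimately show ?thesis by (simp add: S_def)
qed

lemma set_rev_path: "(e, b) \<in> set (rev_path p) \<longleftrightarrow> (e, \<not> b) \<in> set p"
  unfolding rev_path_def by force

lemma sum_list_ind:
  "(\<Sum>c\<leftarrow>xs. if fst c = i then a else 0) = a * real (count_list (map fst xs) i)"
  by (induction xs) (auto simp: algebra_simps)

lemma orient_pos:
  assumes tv: "\<And>j. t j = 1 \<or> t j = -1"
    and cr: "\<And>j c. c \<in> set (fE j) \<Longrightarrow> eps c * t j = t (fst c)"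
  shows "pos_orientable fE"
  unfolding pos_orientable_def
proof (intro exI[of _ "\<lambda>j. t j = 1"] allI)
  fix j
  show "positive_path (\<lambda>j. t j = 1) (oriented_image (\<lambda>j. t j = 1) fE j)"
    unfolding positive_path_def oriented_image_def
  proof (intro ballI, clarify)
    fix e b assume eb: "(e, b) \<in> set (if t j = 1 then fE j else rev_path (fE j))"
    show "b = (t e = 1)"
    proof (cases "t j = 1")
      case True
      then have "eps (e, b) * t j = t e" using eb cr[of "(e,b)" j] by simp
      then show ?thesis using True tv[of e] by (auto simp: eps_def split: if_splits)
    next
      case False
      then have tj: "t j = -1" using tv by blast
      have "(e, \<not> b) \<in> set (fE j)" using eb False by (simp add: set_rev_path)
      then have "eps (e, \<not> b) * t j = t e" using cr by fastforce
      then show ?thesis using tj tv[of e] by (auto simp: eps_def split: if_splits)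
    qed
  qed
qed

lemma orient_neg:
  assumes tv: "\<And>j. t j = 1 \<or> t j = -1"
    and cr: "\<And>j c. c \<in> set (fE j) \<Longrightarrow> eps c * t j = - t (fst c)"
  shows "neg_orientable fE"
  unfolding neg_orientable_def
proof (intro exI[of _ "\<lambda>j. t j = 1"] allI)
  fix j
  show "negative_path (\<lambda>j. t j = 1) (oriented_image (\<lambda>j. t j = 1) fE j)"
    unfolding negative_path_def oriented_image_def
  proof (intro ballI, clarify)
    fix e b assume eb: "(e, b) \<in> set (if t j = 1 then fE j else rev_path (fE j))"
    show "b = (t e \<noteq> 1)"
    proof (cases "t j = 1")
      case True
      then have "eps (e, b) * t j = - t e" using eb cr[of "(e,b)" j] by simp
      then show ?thesis using True tv[of e] by (auto simp: eps_def split: if_splits)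
    next
      case False
      then have tj: "t j = -1" using tv by blast
      have "(e, \<not> b) \<in> set (fE j)" using eb False by (simp add: set_rev_path)
      then have "eps (e, \<not> b) * t j = - t e" using cr by fastforce
      then show ?thesis using tj tv[of e] by (auto simp: eps_def split: if_splits)
    qed
  qed
qed

lemma pos_orient_t:
  assumes "pos_orientable fE"
  obtains t where "\<And>j. t j = 1 \<or> t j = -1" "\<And>j c. c \<in> set (fE j) \<Longrightarrow> eps c * t j = t (fst c)"
proof -
  obtain \<sigma> where s: "\<forall>e. positive_path \<sigma> (oriented_image \<sigma> fE e)"
    using assms by (auto simp: pos_orientable_def)
  define t where "t j = (if \<sigma> j then 1 else -1 :: real)" for j
  have "eps c * t j = t (fst c)" if c: "c \<in> set (fE j)" for j c
  proof (cases c)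
    case (Pair e b)
    show ?thesis
    proof (cases "\<sigma> j")
      case True
      then have "b = \<sigma> e" using s[rule_format, of j] c Pair
        by (auto simp: positive_path_def oriented_image_def)
      then show ?thesis using True Pair by (simp add: t_def eps_def)
    next
      case False
      then have "(e, \<not> b) \<in> set (oriented_image \<sigma> fE j)" using c Pair
        by (simp add: oriented_image_def set_rev_path)
      then have "(\<not> b) = \<sigma> e" using s[rule_format, of j]
        by (auto simp: positive_path_def)
      then show ?thesis using False Pair by (auto simp: t_def eps_def)
    qed
  qed
  then show ?thesis using that[of t] by (auto simp: t_def)
qed

lemma neg_orient_t:
  assumes "neg_orientable fE"
  obtains t where "\<And>j. t j = 1 \<or> t j = -1" "\<And>j c. c \<in> set (fE j) \<Longrightarrow> eps c * t j = - t (fst c)"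
proof -
  obtain \<sigma> where s: "\<forall>e. negative_path \<sigma> (oriented_image \<sigma> fE e)"
    using assms by (auto simp: neg_orientable_def)
  define t where "t j = (if \<sigma> j then 1 else -1 :: real)" for j
  have "eps c * t j = - t (fst c)" if c: "c \<in> set (fE j)" for j c
  proof (cases c)
    case (Pair e b)
    show ?thesis
    proof (cases "\<sigma> j")
      case True
      then have "b = (\<not> \<sigma> e)" using s[rule_format, of j] c Pair
        by (auto simp: negative_path_def oriented_image_def)
      then show ?thesis using True Pair by (auto simp: t_def eps_def)
    next
      case False
      then have "(e, \<not> b) \<in> set (oriented_image \<sigma> fE j)" using c Pair
        by (simp add: oriented_image_def set_rev_path)
      then have "(\<not> b) = (\<not> \<sigma> e)" using s[rule_format, of j]
        by (auto simp: negative_path_def)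
      then show ?thesis using False Pair by (auto simp: t_def eps_def)
    qed
  qed
  then show ?thesis using that[of t] by (auto simp: t_def)
qed

lemma sign_from_t:
  assumes cr: "\<And>j c. c \<in> set (fE j) \<Longrightarrow> eps c * t j = s0 * t (fst c)"
    and tv: "\<And>j. t j = 1 \<or> t j = -1"
  shows "sign_mat fE i j = s0 * t i * t j * trans_mat fE i j"
proof -
  have "sign_mat fE i j = (\<Sum>c\<leftarrow>fE j. if fst c = i then s0 * t i * t j else 0)"
    unfolding sign_mat_def
  proof (intro arg_cong[where f=sum_list] map_cong refl)
    fix c assume c: "c \<in> set (fE j)"
    have "eps c = s0 * t (fst c) * t j" using cr[OF c] tv[of j] by (auto simp: algebra_simps)
    then show "(if fst c = i then if snd c then 1 else - 1 else 0) = (if fst c = i then s0 * t i * t j else 0)"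
      by (auto simp: eps_def split: if_splits)
  qed
  then show ?thesis by (simp add: sum_list_ind trans_mat_def)
qed



lemma rel_pow:
  fixes fE :: "'e::finite \<Rightarrow> ('e \<times> bool) list" and u :: "'e \<Rightarrow> complex"
  assumes cross: "\<And>j p. p < length (fE j) \<Longrightarrow> of_real (eps (fE j ! p)) * u j = \<omega> * u (fst (fE j ! p))"
  shows "mat_pow (trans_mat fE) n i j > 0 \<Longrightarrow> \<exists>s. (s = 1 \<or> s = -1) \<and> u j = of_real s * \<omega> ^ n * u i"
proof (induction n arbitrary: j)
  case 0
  then have "i = j" by (auto split: if_splits)
  then show ?case by (intro exI[of _ 1]) auto
next
  case (Suc n)
  let ?M = "trans_mat fE"
  have nn: "\<And>i j. ?M i j \<ge> 0" by (simp add: trans_mat_nonneg)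
  have "\<exists>l. mat_pow ?M n i l * ?M l j > 0"
  proof (rule ccontr)
    assume "\<not> ?thesis"
    then have "(\<Sum>l\<in>UNIV. mat_pow ?M n i l * ?M l j) \<le> 0" by (intro sum_nonpos) (auto simp: not_less)
    then show False using Suc.prems by (simp add: mat_mult_def)
  qed
  then obtain l where l: "mat_pow ?M n i l * ?M l j > 0" by blast
  have p1: "mat_pow ?M n i l > 0" and p2: "?M l j > 0"
    using l mat_pow_nonneg[of ?M n i l, OF nn] nn[of l j] by (auto simp: zero_less_mult_iff)
  obtain s where s: "s = 1 \<or> s = -1" "u l = of_real s * \<omega> ^ n * u i" using Suc.IH[OF p1] by blast
  have "\<exists>p<length (fE j). fst (fE j ! p) = l"
  proof (rule ccontr)
    assume "\<not> ?thesis"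
    then have "?M l j = 0" unfolding trans_mat_sum by (intro sum.neutral) auto
    then show False using p2 by simp
  qed
  then obtain p where p: "p < length (fE j)" "fst (fE j ! p) = l" by blast
  have ee: "of_real (eps (fE j ! p)) * of_real (eps (fE j ! p)) = (1::complex)"
    by (simp add: eps_def flip: of_real_mult)
  have "u j = of_real (eps (fE j ! p)) * (of_real (eps (fE j ! p)) * u j)"
    by (simp add: ee mult.assoc[symmetric])
  also have "\<dots> = of_real (eps (fE j ! p)) * (\<omega> * u l)" using cross[OF p(1)] p(2) by simp
  also have "\<dots> = of_real (eps (fE j ! p) * s) * \<omega> ^ Suc n * u i"
    using s(2) by (simp add: algebra_simps)
  finally show ?case using s(1) by (intro exI[of _ "eps (fE j ! p) * s"]) (auto simp: eps_def)
qed

lemma key: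
  fixes fE :: "'e::finite \<Rightarrow> ('e \<times> bool) list"
  assumes prim: "primitive (trans_mat fE)"
    and wp: "\<And>i. w i > 0" and wl: "\<And>j. (\<Sum>i\<in>UNIV. w i * trans_mat fE i j) = r * w j" and rp: "r > 0"
    and v0: "v i0 \<noteq> 0" and ev: "mat_vec (sign_mat fE) v = (\<lambda>i. \<mu> * v i)" and mu: "cmod \<mu> = r"
  shows "(\<mu> = of_real r \<and> pos_orientable fE) \<or> (\<mu> = - of_real r \<and> neg_orientable fE)"
proof -
  have nn: "\<And>i j. trans_mat fE i j \<ge> 0" by (simp add: trans_mat_nonneg)
  define z where "z i = cmod (v i)" for i
  define T where "T i q = (if fst (fE (fst q) ! snd q) = i then complex_of_real (eps (fE (fst q) ! snd q)) * v (fst q) else 0)" for i q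
  define K where "K = Sigma (UNIV::'e set) (\<lambda>j. {..<length (fE j)})"
  have finK: "finite K" by (simp add: K_def)
  have rep: "\<mu> * v i = (\<Sum>q\<in>K. T i q)" for i
  proof -
    have "\<mu> * v i = mat_vec (sign_mat fE) v i" using ev by metis
    also have "\<dots> = (\<Sum>j\<in>UNIV. \<Sum>p<length (fE j). T i (j, p))"
      unfolding mat_vec_def sign_mat_sum T_def
      by (intro sum.cong refl) (auto simp: sum_distrib_right intro!: sum.cong)
    also have "\<dots> = (\<Sum>q\<in>K. T i q)" unfolding K_def by (subst sum.Sigma) auto
    finally show ?thesis .
  qed
  have nrep: "(\<Sum>q\<in>K. cmod (T i q)) = (\<Sum>j\<in>UNIV. trans_mat fE i j * z j)" for i
  proof -
    have "(\<Sum>q\<in>K. cmod (T i q)) = (\<Sum>j\<in>UNIV. \<Sum>p<length (fE j). cmod (T i (j, p)))"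
      unfolding K_def by (subst sum.Sigma) auto
    also have "\<dots> = (\<Sum>j\<in>UNIV. trans_mat fE i j * z j)"
      unfolding trans_mat_sum z_def T_def
      by (intro sum.cong refl) (auto simp: sum_distrib_right eps_def norm_mult intro!: sum.cong)
    finally show ?thesis .
  qed
  have le: "r * z i \<le> (\<Sum>j\<in>UNIV. trans_mat fE i j * z j)" for i
  proof -
    have "r * z i = cmod (\<mu> * v i)" using mu by (simp add: z_def norm_mult)
    also have "\<dots> \<le> (\<Sum>q\<in>K. cmod (T i q))" unfolding rep by (rule norm_sum)
    finally show ?thesis using nrep by simp
  qed
  have eqz: "(\<Sum>j\<in>UNIV. trans_mat fE i j * z j) = r * z i" for i
    by (rule dom_eq[OF wp wl le])
  have zpos: "z i > 0" for i
    by (rule prim_pos_vec[OF nn prim, of z i0 r]) (use v0 eqz in \<open>auto simp: z_def\<close>)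
  have treq: "cmod (\<Sum>q\<in>K. T i q) = (\<Sum>q\<in>K. cmod (T i q))" for i
  proof -
    have "cmod (\<Sum>q\<in>K. T i q) = cmod (\<mu> * v i)" using rep[of i] by simp
    also have "\<dots> = r * z i" by (simp add: norm_mult mu z_def)
    finally show ?thesis using nrep[of i] eqz[of i] by simp
  qed
  define u where "u i = v i / of_real (z i)" for i
  define \<omega> where "\<omega> = \<mu> / of_real r"
  have cross: "of_real (eps (fE j ! p)) * u j = \<omega> * u (fst (fE j ! p))" if pl: "p < length (fE j)" for j p
  proof -
    define i where "i = fst (fE j ! p)"
    define a where "a = complex_of_real (eps (fE j ! p)) * v j"
    define b where "b = \<mu> * v i"
    have q: "(j, p) \<in> K" using pl by (simp add: K_def)
    have Tq: "T i (j, p) = a" by (simp add: T_def a_def i_def)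
    have ca: "cmod a = z j" by (simp add: a_def z_def norm_mult eps_def)
    have cb: "cmod b = r * z i" by (simp add: b_def z_def norm_mult mu)
    have "a * cnj b = of_real (cmod a * cmod b)"
      using tri_eq[OF finK treq[of i] q] by (simp only: Tq rep[symmetric] b_def[symmetric])
    then have ab: "a * cnj b = of_real (z j * (r * z i))" by (simp add: ca cb)
    have bb: "b * cnj b = of_real ((r * z i)^2)" by (simp add: complex_norm_square[symmetric] cb del: of_real_power)
    have "a * of_real ((r * z i)^2) = of_real (z j * (r * z i)) * b"
      using ab bb by (metis mult.assoc mult.commute)
    then have "a * of_real (r * z i) = of_real (z j) * b"
      using zpos[of i] rp by (simp add: power2_eq_square field_simps)
    then show ?thesis using zpos[of i] zpos[of j] rp
      by (simp add: u_def \<omega>_def a_def b_def i_def field_simps)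
  qed
  have unz: "u i \<noteq> 0" for i using zpos[of i] by (auto simp: u_def z_def)
  obtain k where k: "\<forall>i j. mat_pow (trans_mat fE) k i j > 0" using prim by (auto simp: primitive_def)
  obtain l0 where l0: "trans_mat fE l0 i0 > 0" using prim_col[OF nn prim] by blast
  have "0 < mat_pow (trans_mat fE) k i0 l0 * trans_mat fE l0 i0" using k l0 by simp
  also have "\<dots> \<le> mat_pow (trans_mat fE) (Suc k) i0 i0"
    unfolding mat_pow.simps mat_mult_def
    by (rule member_le_sum[where f="\<lambda>l. mat_pow (trans_mat fE) k i0 l * trans_mat fE l i0"])
       (use mat_pow_nonneg[of "trans_mat fE", OF nn] nn in \<open>auto intro!: mult_nonneg_nonneg\<close>)
  finally have ks: "mat_pow (trans_mat fE) (Suc k) i0 i0 > 0" .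
  obtain s where s: "s = 1 \<or> s = -1" "u i0 = of_real s * \<omega> ^ k * u i0"
    using rel_pow[OF cross] k by blast
  obtain s' where s': "s' = 1 \<or> s' = -1" "u i0 = of_real s' * \<omega> ^ Suc k * u i0"
    using rel_pow[OF cross ks] by blast
  have 1: "of_real s * \<omega> ^ k = 1" using s(2) unz[of i0] by (metis mult_cancel_right1)
  have 2: "of_real s' * \<omega> ^ k * \<omega> = 1" using s'(2) unz[of i0]
    by (metis mult_cancel_right1 power_Suc2 mult.assoc)
  have "of_real s' * \<omega> = of_real s' * \<omega> * (of_real s * \<omega> ^ k)" using 1 by simp
  also have "\<dots> = of_real s * (of_real s' * \<omega> ^ k * \<omega>)" by (simp add: algebra_simps)
  also have "\<dots> = of_real s" using 2 by simp
  finally have "of_real s' * \<omega> = of_real s" .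
  then have om: "\<omega> = of_real (s * s')" using s(1) s'(1)
    by (auto simp: minus_equation_iff[of \<omega>])
  obtain t where t: "\<And>j. (t j = 1 \<or> t j = -1) \<and> u j = of_real (t j) * \<omega> ^ k * u i0"
    using rel_pow[OF cross] k by metis
  have c0: "\<omega> ^ k * u i0 \<noteq> 0" using om s(1) s'(1) unz[of i0] by auto
  have crt: "of_real (eps c * t j) = \<omega> * of_real (t (fst c))" if c: "c \<in> set (fE j)" for j c
  proof -
    obtain p where p: "p < length (fE j)" "c = fE j ! p" using c by (auto simp: in_set_conv_nth)
    have "of_real (eps c * t j) * (\<omega> ^ k * u i0) = \<omega> * of_real (t (fst c)) * (\<omega> ^ k * u i0)"
      using cross[OF p(1)] t[of j] t[of "fst c"] p(2) by (simp add: algebra_simps)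
    then show ?thesis using c0 by (metis mult_right_cancel)
  qed
  have tv: "\<And>j. t j = 1 \<or> t j = -1" using t by blast
  have "s * s' = 1 \<or> s * s' = -1" using s(1) s'(1) by auto
  then show ?thesis
  proof
    assume o1: "s * s' = 1"
    have "pos_orientable fE"
      by (rule orient_pos[OF tv]) (use crt om o1 in \<open>simp flip: of_real_mult\<close>)
    moreover have "\<omega> = 1" using om o1 by simp
    then have "\<mu> = of_real r" using rp by (simp add: \<omega>_def field_simps)
    ultimately show ?thesis by blast
  next
    assume o1: "s * s' = -1"
    have "neg_orientable fE"
    proof (rule orient_neg[OF tv])
      fix j c assume "c \<in> set (fE j)"
      then have "of_real (eps c * t j) = (complex_of_real (- t (fst c)))" using crt om o1 by simp
      then show "eps c * t j = - t (fst c)" using of_real_eq_iff by blast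
    qed
    moreover have "\<omega> = -1" using om o1 by simp
    then have "\<mu> = - of_real r" using rp by (simp add: \<omega>_def field_simps)
    ultimately show ?thesis by blast
  qed
qed



lemma sum_Nats: "(\<And>x. x \<in> A \<Longrightarrow> f x \<in> \<nat>) \<Longrightarrow> sum f A \<in> \<nat>"
  by (induction A rule: infinite_finite_induct) auto

lemma mat_pow_Nats: "mat_pow (trans_mat fE) n a b \<in> \<nat>"
  by (induction n arbitrary: a b) (auto simp: mat_mult_def trans_mat_def intro!: sum_Nats)

lemma Nats_pos_ge1: "(x::real) \<in> \<nat> \<Longrightarrow> x > 0 \<Longrightarrow> x \<ge> 1"
  by (induction rule: Nats_induct) auto

lemma loops_or_big:
  fixes src tgt :: "'e::finite \<Rightarrow> 'v" and fE :: "'e \<Rightarrow> ('e \<times> bool) list"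
  assumes prim: "primitive (trans_mat fE)"
    and nondeg: "\<not> (card (UNIV :: 'e set) = 1 \<and> (\<forall>e. src e \<noteq> tgt e))"
    and up: "\<And>i. u i > 0" and ur: "\<And>i. (\<Sum>j\<in>UNIV. trans_mat fE i j * u j) = r * u i" and rp: "r > 0"
  shows "r > 1 \<or> (\<forall>e. src e = tgt e)"
proof (rule ccontr)
  assume a: "\<not> ?thesis"
  then have r1: "r \<le> 1" by auto
  obtain k where k: "\<forall>i j. mat_pow (trans_mat fE) k i j > 0" using prim by (auto simp: primitive_def)
  have ge1: "mat_pow (trans_mat fE) k i j \<ge> 1" for i j using k mat_pow_Nats Nats_pos_ge1 by blast
  have all_eq: "i = j" for i j :: 'e
  proof (rule ccontr)
    assume ij: "i \<noteq> j"
    have "u i + u j \<le> mat_pow (trans_mat fE) k i i * u i + mat_pow (trans_mat fE) k i j * u j"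
      using ge1[of i i] ge1[of i j] up[of i] up[of j]
      by (intro add_mono) (auto intro: mult_right_mono[of 1, simplified])
    also have "\<dots> = (\<Sum>l\<in>{i, j}. mat_pow (trans_mat fE) k i l * u l)" using ij by simp
    also have "\<dots> \<le> (\<Sum>l\<in>UNIV. mat_pow (trans_mat fE) k i l * u l)"
      by (rule sum_mono2) (use ge1 up in \<open>auto intro!: mult_nonneg_nonneg simp: order.strict_implies_order order_trans[OF zero_le_one]\<close>)
    also have "\<dots> = r ^ k * u i" by (rule mat_pow_eigen[OF ur])
    also have "\<dots> \<le> u i" using r1 rp up[of i] by (simp add: mult_left_le_one_le power_le_one)
    finally show False using up[of j] by simp
  qed
  obtain i0 :: 'e where True by blast
  have "UNIV = {i0}" using all_eq by auto
  then have "card (UNIV :: 'e set) = 1" by (metis One_nat_def card_1_singleton_iff)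
  then obtain e0 where "src e0 = tgt e0" using nondeg by blast
  then show False using a all_eq by metis
qed

lemma orient_eig:
  fixes src tgt :: "'e::finite \<Rightarrow> 'v::finite" and fE :: "'e \<Rightarrow> ('e \<times> bool) list"
  assumes gm: "graph_map src tgt fV fE" and prim: "primitive (trans_mat fE)"
    and nondeg: "\<not> (card (UNIV :: 'e set) = 1 \<and> (\<forall>e. src e \<noteq> tgt e))"
    and cr: "\<And>j c. c \<in> set (fE j) \<Longrightarrow> eps c * t j = s0 * t (fst c)"
    and tv: "\<And>j. t j = 1 \<or> t j = -1" and s0: "s0 = 1 \<or> s0 = -1"
  shows "H1_eigenvalue src tgt fE (of_real (s0 * spectral_rad (trans_mat fE)))"
proof -
  have nn: "\<And>i j. trans_mat fE i j \<ge> 0" by (simp add: trans_mat_nonneg)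
  obtain u w r where up: "\<And>i. u i > 0" and wp: "\<And>i. w i > 0" and rp: "r > 0"
    and ur: "\<And>i. (\<Sum>j\<in>UNIV. trans_mat fE i j * u j) = r * u i"
    and wl: "\<And>j. (\<Sum>i\<in>UNIV. w i * trans_mat fE i j) = r * w j"
    using perron[OF nn prim] by blast
  have sr: "spectral_rad (trans_mat fE) = r" by (rule spectral_rad_eq[OF nn up wp ur wl])
  define v where "v i = complex_of_real (t i * u i)" for i
  have tt: "t j * t j = 1" for j using tv[of j] by auto
  have ev: "mat_vec (sign_mat fE) v = (\<lambda>i. of_real (s0 * r) * v i)"
  proof
    fix i
    have "mat_vec (sign_mat fE) v i = of_real (\<Sum>j\<in>UNIV. sign_mat fE i j * (t j * u j))"
      unfolding mat_vec_def v_def by simp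
    also have "\<dots> = of_real (\<Sum>j\<in>UNIV. s0 * t i * (t j * t j) * (trans_mat fE i j * u j))"
      by (intro arg_cong[where f=of_real] sum.cong refl) (simp add: sign_from_t[OF cr tv] algebra_simps)
    also have "\<dots> = of_real (s0 * t i * (\<Sum>j\<in>UNIV. trans_mat fE i j * u j))"
      by (simp add: tt sum_distrib_left)
    also have "\<dots> = of_real (s0 * t i * (r * u i))" by (simp only: ur)
    also have "\<dots> = of_real (s0 * r) * v i" by (simp add: v_def algebra_simps)
    finally show "mat_vec (sign_mat fE) v i = of_real (s0 * r) * v i" .
  qed
  obtain i0 :: 'e where True by blast
  have v0: "v i0 \<noteq> 0" using up[of i0] tv[of i0] by (auto simp: v_def)
  have cyc: "is_cycle src tgt v"
  proof (cases "r > 1")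
    case True
    then show ?thesis using s0 by (intro eig_cycle_big[OF gm ev]) auto
  next
    case False
    then have "\<forall>e. src e = tgt e" using loops_or_big[OF prim nondeg up ur rp] by blast
    then show ?thesis unfolding is_cycle_def bdry_def by (auto intro!: sum.neutral)
  qed
  show ?thesis unfolding H1_eigenvalue_def sr using v0 cyc ev by blast
qed

lemma sign_le: "\<bar>sign_mat fE i j\<bar> \<le> trans_mat fE i j"
  unfolding sign_mat_sum trans_mat_sum
  by (rule order.trans[OF sum_abs]) (auto simp: eps_def intro!: sum_mono)

lemma H1_bound:
  fixes fE :: "'e::finite \<Rightarrow> ('e \<times> bool) list"
  assumes wp: "\<And>i. w i > 0" and wl: "\<And>j. (\<Sum>i\<in>UNIV. w i * trans_mat fE i j) = r * w j"
    and h: "H1_eigenvalue src tgt fE \<mu>"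
  shows "cmod \<mu> \<le> r"
proof -
  obtain v i0 where v: "v i0 \<noteq> 0" "mat_vec (sign_mat fE) v = (\<lambda>i. \<mu> * v i)"
    using h by (auto simp: H1_eigenvalue_def)
  show ?thesis
  proof (rule dom_le[OF wp wl, of "\<lambda>i. cmod (v i)" i0])
    fix i
    have "cmod \<mu> * cmod (v i) = cmod (mat_vec (sign_mat fE) v i)" using v(2) by (simp add: norm_mult)
    also have "\<dots> \<le> (\<Sum>j\<in>UNIV. cmod (complex_of_real (sign_mat fE i j) * v j))"
      unfolding mat_vec_def by (rule norm_sum)
    also have "\<dots> \<le> (\<Sum>j\<in>UNIV. trans_mat fE i j * cmod (v j))"
      by (intro sum_mono) (simp add: norm_mult mult_right_mono sign_le)
    finally show "cmod \<mu> * cmod (v i) \<le> (\<Sum>j\<in>UNIV. trans_mat fE i j * cmod (v j))" .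
  qed (use v in auto)
qed



lemma H1_eig_compact:
  fixes src tgt :: "'e::finite \<Rightarrow> 'v::finite" and fE :: "'e \<Rightarrow> ('e \<times> bool) list"
  assumes bd: "\<And>\<mu>. H1_eigenvalue src tgt fE \<mu> \<Longrightarrow> cmod \<mu> \<le> r"
  shows "compact {\<mu>. H1_eigenvalue src tgt fE \<mu>}"
proof -
  define C where "C = {p :: complex \<times> (complex^'e).
     (\<forall>i. (\<Sum>j\<in>UNIV. complex_of_real (sign_mat fE i j) * snd p $ j) = fst p * snd p $ i) \<and>
     (\<forall>w. (\<Sum>e\<in>UNIV. (of_bool (tgt e = w) - of_bool (src e = w)) * snd p $ e) = 0)}"
  have cC: "closed C" unfolding C_def
    by (intro closed_Collect_conj closed_Collect_all closed_Collect_eq continuous_intros)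
  define T where "T = (cball 0 r \<times> sphere 0 1) \<inter> C"
  have cT: "compact T" unfolding T_def
    by (intro compact_Int_closed compact_Times compact_cball compact_sphere cC)
  have E: "{\<mu>. H1_eigenvalue src tgt fE \<mu>} = fst ` T"
  proof (intro set_eqI iffI)
    fix \<mu> assume "\<mu> \<in> {\<mu>. H1_eigenvalue src tgt fE \<mu>}"
    then have h: "H1_eigenvalue src tgt fE \<mu>" by simp
    then obtain v i0 where v: "v i0 \<noteq> 0" "is_cycle src tgt v" "mat_vec (sign_mat fE) v = (\<lambda>i. \<mu> * v i)"
      by (auto simp: H1_eigenvalue_def)
    define x where "x = (\<chi> i. v i)"
    have "x \<noteq> 0" using v(1) by (auto simp: x_def vec_eq_iff)
    then have nx: "norm x > 0" by simp
    define y where "y = scaleR (1 / norm x) x"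
    have yi: "y $ i = v i / of_real (norm x)" for i
    proof -
      have "y $ i = (1 / norm x) *\<^sub>R v i" by (simp add: y_def x_def)
      also have "\<dots> = v i / of_real (norm x)" by (simp add: scaleR_conv_of_real)
      finally show ?thesis .
    qed
    have ny: "norm y = 1" using nx by (simp add: y_def)
    have c1: "(\<Sum>j\<in>UNIV. complex_of_real (sign_mat fE i j) * y $ j) = \<mu> * y $ i" for i
    proof -
      have "(\<Sum>j\<in>UNIV. complex_of_real (sign_mat fE i j) * y $ j)
          = mat_vec (sign_mat fE) v i / of_real (norm x)"
        by (simp add: yi mat_vec_def sum_divide_distrib)
      then show ?thesis using v(3) by (simp add: yi)
    qed
    have c2: "(\<Sum>e\<in>UNIV. (of_bool (tgt e = w) - of_bool (src e = w)) * y $ e) = 0" for w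
    proof -
      have "(\<Sum>e\<in>UNIV. (of_bool (tgt e = w) - of_bool (src e = w)) * y $ e)
          = bdry src tgt v w / of_real (norm x)"
        by (simp add: yi bdry_lin sum_divide_distrib)
      then show ?thesis using v(2) by (simp add: is_cycle_def)
    qed
    have "(\<mu>, y) \<in> T" using bd[OF h] ny c1 c2 by (simp add: T_def C_def)
    then show "\<mu> \<in> fst ` T" by force
  next
    fix \<mu> assume "\<mu> \<in> fst ` T"
    then obtain y where y: "(\<mu>, y) \<in> T" by force
    define v where "v i = y $ i" for i
    have "y \<noteq> 0" using y by (auto simp: T_def)
    then obtain i0 where "v i0 \<noteq> 0" by (auto simp: v_def vec_eq_iff)
    moreover have "is_cycle src tgt v" using y
      by (auto simp: T_def C_def is_cycle_def bdry_lin v_def)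
    moreover have "mat_vec (sign_mat fE) v = (\<lambda>i. \<mu> * v i)" using y
      by (auto simp: T_def C_def mat_vec_def v_def)
    ultimately show "\<mu> \<in> {\<mu>. H1_eigenvalue src tgt fE \<mu>}"
      by (auto simp: H1_eigenvalue_def)
  qed
  show ?thesis unfolding E
    by (rule compact_continuous_image[OF _ cT]) (intro continuous_intros)
qed

theorem theoremA:
  fixes src tgt :: "'e::finite \<Rightarrow> 'v::finite"
    and fV :: "'v \<Rightarrow> 'v"
    and fE :: "'e \<Rightarrow> ('e \<times> bool) list"
  assumes gm: "graph_map src tgt fV fE"
    and prim: "primitive (trans_mat fE)"
    and nondeg: "\<not> (card (UNIV :: 'e set) = 1 \<and> (\<forall>e. src e \<noteq> tgt e))"
  shows "(spectral_rad (trans_mat fE) = H1_spectral_rad src tgt fE \<longleftrightarrow> orientable fE)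
       \<and> (H1_eigenvalue src tgt fE (complex_of_real (spectral_rad (trans_mat fE))) \<longleftrightarrow> pos_orientable fE)
       \<and> (H1_eigenvalue src tgt fE (- complex_of_real (spectral_rad (trans_mat fE))) \<longleftrightarrow> neg_orientable fE)"
proof -
  have nn: "\<And>i j. trans_mat fE i j \<ge> 0" by (simp add: trans_mat_nonneg)
  obtain u w r where up: "\<And>i. u i > 0" and wp: "\<And>i. w i > 0" and rp: "r > 0"
    and ur: "\<And>i. (\<Sum>j\<in>UNIV. trans_mat fE i j * u j) = r * u i"
    and wl: "\<And>j. (\<Sum>i\<in>UNIV. w i * trans_mat fE i j) = r * w j"
    using perron[OF nn prim] by blast
  have sr: "spectral_rad (trans_mat fE) = r" by (rule spectral_rad_eq[OF nn up wp ur wl])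
  have bd: "\<And>\<mu>. H1_eigenvalue src tgt fE \<mu> \<Longrightarrow> cmod \<mu> \<le> r" by (rule H1_bound[OF wp wl])
  have keyH: "(\<mu> = of_real r \<and> pos_orientable fE) \<or> (\<mu> = - of_real r \<and> neg_orientable fE)"
    if h: "H1_eigenvalue src tgt fE \<mu>" and m: "cmod \<mu> = r" for \<mu>
  proof -
    obtain v i0 where v: "v i0 \<noteq> 0" "mat_vec (sign_mat fE) v = (\<lambda>i. \<mu> * v i)"
      using h by (auto simp: H1_eigenvalue_def)
    show ?thesis by (rule key[OF prim wp wl rp v m])
  qed
  have posE: "H1_eigenvalue src tgt fE (of_real r)" if po: "pos_orientable fE"
  proof -
    obtain t where t: "\<And>j. t j = 1 \<or> t j = -1" "\<And>j c. c \<in> set (fE j) \<Longrightarrow> eps c * t j = t (fst c)"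
      using pos_orient_t[OF po] by blast
    have "H1_eigenvalue src tgt fE (of_real (1 * spectral_rad (trans_mat fE)))"
      by (rule orient_eig[OF gm prim nondeg _ t(1)]) (use t(2) in auto)
    then show ?thesis by (simp add: sr)
  qed
  have negE: "H1_eigenvalue src tgt fE (- of_real r)" if no: "neg_orientable fE"
  proof -
    obtain t where t: "\<And>j. t j = 1 \<or> t j = -1" "\<And>j c. c \<in> set (fE j) \<Longrightarrow> eps c * t j = - t (fst c)"
      using neg_orient_t[OF no] by blast
    have "H1_eigenvalue src tgt fE (of_real (-1 * spectral_rad (trans_mat fE)))"
      by (rule orient_eig[OF gm prim nondeg _ t(1)]) (use t(2) in auto)
    then show ?thesis by (simp add: sr)
  qed
  have p2: "H1_eigenvalue src tgt fE (complex_of_real r) \<longleftrightarrow> pos_orientable fE"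
  proof
    assume "H1_eigenvalue src tgt fE (complex_of_real r)"
    from keyH[OF this] rp show "pos_orientable fE" by auto
  qed (rule posE)
  have p3: "H1_eigenvalue src tgt fE (- complex_of_real r) \<longleftrightarrow> neg_orientable fE"
  proof
    assume "H1_eigenvalue src tgt fE (- complex_of_real r)"
    from keyH[OF this] rp show "neg_orientable fE" by auto
  qed (rule negE)
  define X where "X = insert 0 (cmod ` {\<mu>. H1_eigenvalue src tgt fE \<mu>})"
  have rho: "H1_spectral_rad src tgt fE = Sup X" by (simp add: H1_spectral_rad_def X_def)
  have Xle: "x \<le> r" if "x \<in> X" for x using that bd rp by (auto simp: X_def)
  have p1: "r = H1_spectral_rad src tgt fE \<longleftrightarrow> orientable fE"
  proof
    assume eq: "r = H1_spectral_rad src tgt fE"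
    have "compact (cmod ` {\<mu>. H1_eigenvalue src tgt fE \<mu>})"
      by (rule compact_continuous_image[OF _ H1_eig_compact[OF bd]]) (intro continuous_intros)
    then have "compact X" by (simp add: X_def compact_insert)
    moreover have "bdd_above X" using \<open>compact X\<close> by (intro bounded_imp_bdd_above compact_imp_bounded)
    ultimately have "Sup X \<in> X"
      by (intro closed_contains_Sup) (auto simp: X_def compact_imp_closed)
    then have "r \<in> X" using eq rho by simp
    then obtain \<mu> where "H1_eigenvalue src tgt fE \<mu>" "cmod \<mu> = r" using rp by (auto simp: X_def)
    then show "orientable fE" using keyH by (auto simp: orientable_def)
  next
    assume "orientable fE"
    then have "r \<in> X"
      using posE negE rp unfolding orientable_def X_def
      by (auto intro: image_eqI[where x="of_real r"] image_eqI[where x="- of_real r"])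
    then show "r = H1_spectral_rad src tgt fE"
      unfolding rho by (intro cSup_eq_maximum[symmetric] Xle)
  qed
  show ?thesis using p1 p2 p3 sr by simp
qed


end
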